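(* Let $\Sigma$ (a $d\times d_1$ matrix function) and $b$ be Borel measurable on $\mathbb{R}^d$, $A=\Sigma\Sigma^t$, and suppose that for some $\lambda>0$ and all $x\neq y$, $$\langle x-y,b(x)-b(y)\rangle\ge-\lambda|x-y|^2,\qquad \mathrm{trace}\bigl((\Sigma(x)-\Sigma(y))(\Sigma(x)-\Sigma(y))^t\bigr)>\lambda|x-y|^2.$$ Then there exists at most one probability solution $\mu$ to $L^*\mu=0$ with $\int(\|\Sigma(x)\|^2+|b(x)||x|)\,\mu(dx)<\infty$.
   Context: For a symmetric nonnegative definite matrix $A(x)=(a^{ij}(x))$ and a vector field $b(x)=(b^i(x))$ with Borel measurable entries, $Lf(x)=\mathrm{trace}(A(x)D^2f(x))+\langle b(x),\nabla f(x)\rangle$. A probability solution to $L^*\mu=0$ is a Borel probability measure $\mu$ on $\mathbb{R}^d$ such that all $a^{ij}$ and $b^i$ are $\mu$-integrable on every compact set and $\int_{\mathbb{R}^d}Lf\,d\mu=0$ for every $f\in C_0^\infty(\mathbb{R}^d)$. *)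

theory Defs
  imports "HOL-Analysis.Analysis" "HOL-Probability.Probability"
begin

fun iter_partial :: "'n::finite list \<Rightarrow> (real^'n \<Rightarrow> real) \<Rightarrow> (real^'n \<Rightarrow> real)" where
  "iter_partial [] f = f"
| "iter_partial (i # is) f = (\<lambda>x. frechet_derivative (iter_partial is f) (at x) (axis i 1))"

definition smooth :: "(real^'n::finite \<Rightarrow> real) \<Rightarrow> bool" where
  "smooth f \<longleftrightarrow> (\<forall>is. iter_partial is f differentiable_on UNIV
                        \<and> continuous_on UNIV (iter_partial is f))"

definition test_fun :: "(real^'n::finite \<Rightarrow> real) \<Rightarrow> bool" where
  "test_fun f \<longleftrightarrow> smooth f \<and> compact (closure {x. f x \<noteq> 0})"

definition grad :: "(real^'n::finite \<Rightarrow> real) \<Rightarrow> real^'n \<Rightarrow> real^'n" where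
  "grad f x = (\<chi> i. iter_partial [i] f x)"

definition hess :: "(real^'n::finite \<Rightarrow> real) \<Rightarrow> real^'n \<Rightarrow> real^'n^'n" where
  "hess f x = (\<chi> i j. iter_partial [i, j] f x)"

definition gen_op :: "(real^'n \<Rightarrow> real^'n^'n) \<Rightarrow> (real^'n \<Rightarrow> real^'n) \<Rightarrow>
    (real^'n::finite \<Rightarrow> real) \<Rightarrow> real^'n \<Rightarrow> real" where
  "gen_op A b f x = trace (A x ** hess f x) + inner (b x) (grad f x)"

definition prob_solution :: "(real^'n \<Rightarrow> real^'n^'n) \<Rightarrow> (real^'n \<Rightarrow> real^'n) \<Rightarrow>
    (real^'n::finite) measure \<Rightarrow> bool" where
  "prob_solution A b \<mu> \<longleftrightarrow>
     prob_space \<mu> \<and> sets \<mu> = sets borel \<and>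
     (\<forall>K. compact K \<longrightarrow>
        (\<forall>i j. set_integrable \<mu> K (\<lambda>x. A x $ i $ j)) \<and>
        (\<forall>i. set_integrable \<mu> K (\<lambda>x. b x $ i))) \<and>
     (\<forall>f. test_fun f \<longrightarrow> (\<integral>x. gen_op A b f x \<partial>\<mu>) = 0)"

end

theory Submission
  imports Defs
begin

definition G :: "nat \<Rightarrow> real \<Rightarrow> real" where
  "G k s = (if s > 0 then exp (- inverse s) / s ^ k else 0)"

lemma G_tendsto0: "(G k \<longlongrightarrow> 0) (at (0::real))"
proof -
  have r: "((\<lambda>s. exp (- inverse s) / s ^ k) \<longlongrightarrow> 0) (at_right (0::real))"
  proof -
    have "((\<lambda>t. t ^ k / exp t) \<longlongrightarrow> (0::real)) at_top" by (rule tendsto_power_div_exp_0)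
    from filterlim_compose[OF this filterlim_inverse_at_top_right]
    have "((\<lambda>s. inverse s ^ k / exp (inverse s)) \<longlongrightarrow> (0::real)) (at_right 0)" .
    moreover have "eventually (\<lambda>s. inverse s ^ k / exp (inverse s) = exp (- inverse s) / s ^ k) (at_right (0::real))"
      by (auto simp: eventually_at_right_field exp_minus field_simps power_inverse intro!: exI[of _ 1])
    ultimately show ?thesis by (rule Lim_transform_eventually)
  qed
  have "(G k \<longlongrightarrow> 0) (at_right (0::real))"
    by (rule Lim_transform_eventually[OF r]) (auto simp: G_def eventually_at_right_field intro!: exI[of _ 1])
  moreover have "(G k \<longlongrightarrow> 0) (at_left (0::real))"
    by (rule Lim_transform_eventually[OF tendsto_const[of 0]]) (auto simp: G_def eventually_at_left_field intro!: exI[of _ "-1"])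
  ultimately show ?thesis by (simp add: filterlim_split_at)
qed

lemma G_0[simp]: "s \<le> 0 \<Longrightarrow> G k s = 0" by (simp add: G_def)

lemma G_deriv: "(G k has_real_derivative (- real k * G (k+1) s + G (k+2) s)) (at s)"
proof (cases "s > 0")
  case True
  have "((\<lambda>s. exp (- inverse s) / s ^ k) has_real_derivative (- real k * G (k+1) s + G (k+2) s)) (at s)"
    using True
  proof -
    have e: "(\<lambda>s::real. exp (- inverse s) / s ^ k) = (\<lambda>s. exp (- inverse s) * inverse s ^ k)"
      by (intro ext) (simp add: field_simps)
    have "((\<lambda>s. exp (- inverse s) * inverse s ^ k) has_real_derivative
       (exp (- inverse s) * (inverse s ^ 2) * inverse s ^ k + exp (- inverse s) * (real k * inverse s ^ (k - 1) * (- (inverse s ^ 2))))) (at s)"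
      using True by (auto intro!: derivative_eq_intros simp: power2_eq_square)
    moreover have "exp (- inverse s) * (inverse s ^ 2) * inverse s ^ k + exp (- inverse s) * (real k * inverse s ^ (k - 1) * (- (inverse s ^ 2)))
       = - real k * G (k+1) s + G (k+2) s"
      using True by (cases k) (auto simp: G_def field_simps power2_eq_square)
    ultimately show ?thesis unfolding e by simp
  qed
  then show ?thesis
    apply (rule has_field_derivative_transform_within_open[where S="{0<..}"])
    using True by (auto simp: G_def)
next
  case False
  show ?thesis
  proof (cases "s < 0")
    case True
    have "((\<lambda>s. 0) has_real_derivative (- real k * G (k+1) s + G (k+2) s)) (at s)"
      using True by (auto intro!: derivative_eq_intros)
    then show ?thesis
      apply (rule has_field_derivative_transform_within_open[where S="{..<0}"])
      using True by (auto simp: G_def)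
  next
    case False
    then have s: "s = 0" using \<open>\<not> s > 0\<close> by simp
    have "((\<lambda>h. (G k (0 + h) - G k 0) / h) \<longlongrightarrow> 0) (at 0)"
    proof (rule Lim_transform_eventually[OF G_tendsto0[of "k+1"]])
      show "\<forall>\<^sub>F x in at 0. G (k + 1) x = (G k (0 + x) - G k 0) / x"
        by (auto simp: G_def eventually_at_filter)
    qed
    then show ?thesis using s by (simp add: DERIV_def)
  qed
qed

inductive_set Dset :: "real^'n::finite \<Rightarrow> real \<Rightarrow> (real^'n \<Rightarrow> real) set" for z :: "real^'n" and R :: real where
  Dconst: "(\<lambda>x. c) \<in> Dset z R"
| Dcoord: "(\<lambda>x. x $ i) \<in> Dset z R"
| DG: "(\<lambda>x. G k (1 - inner (x - z) (x - z) / R^2)) \<in> Dset z R"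
| Dadd: "f \<in> Dset z R \<Longrightarrow> g \<in> Dset z R \<Longrightarrow> (\<lambda>x. f x + g x) \<in> Dset z R"
| Dmult: "f \<in> Dset z R \<Longrightarrow> g \<in> Dset z R \<Longrightarrow> (\<lambda>x. f x * g x) \<in> Dset z R"

lemma Dset_deriv:
  assumes "f \<in> Dset z R"
  shows "\<exists>f'. (\<forall>x. (f has_derivative f' x) (at x)) \<and> (\<forall>i. (\<lambda>x. f' x (axis i 1)) \<in> Dset z R)"
  using assms
proof induction
  case (Dconst c)
  show ?case by (rule exI[of _ "\<lambda>x h. 0"]) (auto intro: Dset.intros)
next
  case (Dcoord j)
  show ?case
    by (rule exI[of _ "\<lambda>x h. h $ j"]) (auto intro!: Dset.intros bounded_linear_imp_has_derivative bounded_linear_vec_nth bounded_linear_ident)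
next
  case (DG k)
  let ?q = "\<lambda>x. 1 - inner (x - z) (x - z) / R^2"
  let ?D = "\<lambda>x. - real k * G (k+1) (?q x) + G (k+2) (?q x)"
  have d1: "((\<lambda>x. G k (?q x)) has_derivative (\<lambda>h. (- ((inner h (x - z) + inner (x - z) h) / R^2)) * ?D x)) (at x)" for x
  proof -
    have "((\<lambda>x. 1 - inverse (R^2) * inner (x - z) (x - z)) has_derivative (\<lambda>h. 0 - inverse (R^2) * (inner h (x - z) + inner (x - z) h))) (at x)"
      by (intro derivative_intros) (auto intro!: derivative_eq_intros)
    then have "(?q has_derivative (\<lambda>h. - ((inner h (x - z) + inner (x - z) h) / R^2))) (at x)"
      by (simp add: divide_inverse mult.commute)
    then show ?thesis by (rule DERIV_compose_FDERIV[OF G_deriv])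
  qed
  moreover have d2: "(\<lambda>x. (- ((inner (axis i 1) (x - z) + inner (x - z) (axis i 1)) / R^2)) * ?D x) \<in> Dset z R" for i
  proof -
    have e: "(\<lambda>x. (- ((inner (axis i 1) (x - z) + inner (x - z) (axis i 1)) / R^2)) * ?D x)
      = (\<lambda>x. ((- 2 / R^2) * (x $ i + (- z $ i))) * ((- real k) * G (k+1) (?q x) + G (k+2) (?q x)))"
      by (auto simp: inner_axis inner_axis' field_simps)
    show ?thesis unfolding e by (intro Dset.intros)
  qed
  ultimately show ?case
    by (intro exI[of _ "\<lambda>x h. (- ((inner h (x - z) + inner (x - z) h) / R^2)) * ?D x"]) auto
next
  case (Dadd f g)
  then obtain f' g' where f: "\<forall>x. (f has_derivative f' x) (at x)" "\<forall>i. (\<lambda>x. f' x (axis i 1)) \<in> Dset z R"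
    and g: "\<forall>x. (g has_derivative g' x) (at x)" "\<forall>i. (\<lambda>x. g' x (axis i 1)) \<in> Dset z R" by blast
  show ?case
    by (rule exI[of _ "\<lambda>x h. f' x h + g' x h"]) (use f g in \<open>auto intro!: Dset.intros has_derivative_add\<close>)
next
  case (Dmult f g)
  then obtain f' g' where f: "\<forall>x. (f has_derivative f' x) (at x)" "\<forall>i. (\<lambda>x. f' x (axis i 1)) \<in> Dset z R"
    and g: "\<forall>x. (g has_derivative g' x) (at x)" "\<forall>i. (\<lambda>x. g' x (axis i 1)) \<in> Dset z R" by blast
  show ?case
    by (rule exI[of _ "\<lambda>x h. f x * g' x h + f' x h * g x"]) (use f g Dmult.hyps in \<open>auto intro!: Dset.intros has_derivative_mult\<close>)
qed

lemma Dset_iter: "f \<in> Dset z R \<Longrightarrow> iter_partial is f \<in> Dset z R"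
proof (induction "is")
  case Nil then show ?case by simp
next
  case (Cons i "is")
  then obtain f' where f': "\<forall>x. (iter_partial is f has_derivative f' x) (at x)" "\<forall>i. (\<lambda>x. f' x (axis i 1)) \<in> Dset z R"
    using Dset_deriv by blast
  have "iter_partial (i # is) f = (\<lambda>x. f' x (axis i 1))"
  proof
    fix x show "iter_partial (i # is) f x = f' x (axis i 1)"
      using frechet_derivative_at[OF f'(1)[rule_format, of x]] by simp
  qed
  then show ?case using f'(2) by simp
qed

lemma Dset_smooth: "f \<in> Dset z R \<Longrightarrow> smooth f"
  unfolding smooth_def
proof (intro allI conjI)
  fix "is"
  assume "f \<in> Dset z R"
  then have "iter_partial is f \<in> Dset z R" by (rule Dset_iter)
  then obtain f' where f': "\<forall>x. (iter_partial is f has_derivative f' x) (at x)"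
    using Dset_deriv by blast
  show "iter_partial is f differentiable_on UNIV"
    using f' by (auto simp: differentiable_on_def differentiable_def)
  show "continuous_on UNIV (iter_partial is f)"
    using f' by (auto intro!: continuous_at_imp_continuous_on has_derivative_continuous)
qed

lemma Dset_sum: "finite S \<Longrightarrow> (\<And>i. i \<in> S \<Longrightarrow> f i \<in> Dset z R) \<Longrightarrow> (\<lambda>x. \<Sum>i\<in>S. f i x) \<in> Dset z R"
proof (induction S rule: finite_induct)
  case empty then show ?case by (simp add: Dconst)
next
  case (insert a S)
  then show ?case by (auto intro!: Dadd)
qed

lemma G_chain[derivative_intros]:
  "(f has_real_derivative f') (at x within S) \<Longrightarrow>
   ((\<lambda>x. G k (f x)) has_real_derivative (- real k * G (k+1) (f x) + G (k+2) (f x)) * f') (at x within S)"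
  by (rule DERIV_chain2[OF G_deriv])

lemma G_Suc2[simp]: "G (Suc (Suc 0)) = G 2" "G (Suc (Suc (Suc 0))) = G 3" "G (Suc (Suc (Suc (Suc 0)))) = G 4"
  by (simp_all add: eval_nat_numeral)

definition phi :: "real \<Rightarrow> real \<Rightarrow> real" where
  "phi R r = exp 1 * r * G 0 (1 - r / R^2)"
definition phi1 :: "real \<Rightarrow> real \<Rightarrow> real" where
  "phi1 R r = exp 1 * (G 0 (1 - r / R^2) - r / R^2 * G 2 (1 - r / R^2))"
definition phi2 :: "real \<Rightarrow> real \<Rightarrow> real" where
  "phi2 R r = exp 1 / R^2 * (- 2 * G 2 (1 - r / R^2) + r / R^2 * (- 2 * G 3 (1 - r / R^2) + G 4 (1 - r / R^2)))"

lemma phi_deriv: "R \<noteq> 0 \<Longrightarrow> (phi R has_real_derivative phi1 R r) (at r)"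
  unfolding phi_def phi1_def
  by (auto intro!: derivative_eq_intros simp: field_simps)

lemma phi1_deriv: "R \<noteq> 0 \<Longrightarrow> (phi1 R has_real_derivative phi2 R r) (at r)"
  unfolding phi1_def phi2_def
  by (auto intro!: derivative_eq_intros simp: field_simps)

lemma r_deriv: "((\<lambda>x::real^'n::finite. inner (x - z) (x - z)) has_derivative (\<lambda>h. inner h (x - z) + inner (x - z) h)) (at x)"
  by (auto intro!: derivative_eq_intros)

lemma fz_partial1:
  assumes "R \<noteq> 0"
  shows "iter_partial [j] (\<lambda>x::real^'n::finite. phi R (inner (x - z) (x - z))) = (\<lambda>x. 2 * (x$j - z$j) * phi1 R (inner (x - z) (x - z)))"
proof
  fix x :: "real^'n"
  have "((\<lambda>x. phi R (inner (x - z) (x - z))) has_derivative (\<lambda>h. (inner h (x - z) + inner (x - z) h) * phi1 R (inner (x - z) (x - z)))) (at x)"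
    by (rule DERIV_compose_FDERIV[OF phi_deriv[OF assms] r_deriv])
  note d = this
  have fd: "frechet_derivative (\<lambda>x. phi R (inner (x - z) (x - z))) (at x) (axis j 1) = (inner (axis j 1) (x - z) + inner (x - z) (axis j 1)) * phi1 R (inner (x - z) (x - z))"
    by (simp only: frechet_derivative_at[OF d, symmetric])
  show "iter_partial [j] (\<lambda>x::real^'n::finite. phi R (inner (x - z) (x - z))) x = 2 * (x$j - z$j) * phi1 R (inner (x - z) (x - z))"
    using fd by (simp add: inner_axis inner_axis' algebra_simps del: inner_diff_left inner_diff_right)
qed

lemma fz_partial2:
  assumes "R \<noteq> 0"
  shows "iter_partial [i, j] (\<lambda>x::real^'n::finite. phi R (inner (x - z) (x - z))) x =
     2 * (if i = j then 1 else 0) * phi1 R (inner (x - z) (x - z)) + 4 * (x - z)$i * (x - z)$j * phi2 R (inner (x - z) (x - z))"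
proof -
  have p1: "((\<lambda>x. phi1 R (inner (x - z) (x - z))) has_derivative (\<lambda>h. (inner h (x - z) + inner (x - z) h) * phi2 R (inner (x - z) (x - z)))) (at x)"
    by (rule DERIV_compose_FDERIV[OF phi1_deriv[OF assms] r_deriv])
  have d: "((\<lambda>x. 2 * (x$j - z$j) * phi1 R (inner (x - z) (x - z))) has_derivative
     (\<lambda>h. 2 * (x$j - z$j) * ((inner h (x - z) + inner (x - z) h) * phi2 R (inner (x - z) (x - z))) + 2 * (h$j - 0) * phi1 R (inner (x - z) (x - z)))) (at x)"
  proof -
    have cj: "((\<lambda>x::real^'n. x $ j) has_derivative (\<lambda>x. x $ j)) (at x)"
      by (rule bounded_linear_imp_has_derivative) auto
    have "((\<lambda>x. 2 * (x$j - z$j)) has_derivative (\<lambda>h. 2 * (h$j - 0))) (at x)"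
      by (intro derivative_intros cj)
    from has_derivative_mult[OF this p1] show ?thesis .
  qed
  have e1: "iter_partial [i, j] (\<lambda>x::real^'n::finite. phi R (inner (x - z) (x - z))) x =
     frechet_derivative (\<lambda>x. 2 * (x$j - z$j) * phi1 R (inner (x - z) (x - z))) (at x) (axis i 1)"
    by (subst iter_partial.simps(2)) (simp only: fz_partial1[OF assms])
  show ?thesis
    unfolding e1 frechet_derivative_at[OF d, symmetric]
    by (simp add: inner_axis inner_axis' axis_nth algebra_simps del: inner_diff_left inner_diff_right) (simp add: axis_def)
qed

lemma gen_op_fz:
  fixes A :: "real^'n::finite \<Rightarrow> real^'n^'n" and b :: "real^'n \<Rightarrow> real^'n"
  assumes "R \<noteq> 0"
  shows "gen_op A b (\<lambda>x. phi R (inner (x - z) (x - z))) x =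
    2 * phi1 R (inner (x - z) (x - z)) * (trace (A x) + inner (b x) (x - z))
    + 4 * phi2 R (inner (x - z) (x - z)) * (\<Sum>i\<in>UNIV. \<Sum>k\<in>UNIV. A x $ i $ k * (x - z) $ k * (x - z) $ i)"
proof -
  define F where "F = (\<lambda>x::real^'n. phi R (inner (x - z) (x - z)))"
  define v where "v = x - z"
  define p1 where "p1 = phi1 R (inner v v)"
  define p2 where "p2 = phi2 R (inner v v)"
  have H: "hess F x $ k $ i = 2 * (if k = i then 1 else 0) * p1 + 4 * v$k * v$i * p2" for k i
    unfolding hess_def F_def p1_def p2_def v_def by (simp only: vec_lambda_beta fz_partial2[OF assms])
  have Gr: "grad F x $ j = 2 * v$j * p1" for j
    unfolding grad_def F_def p1_def v_def by (simp add: fz_partial1[OF assms] del: iter_partial.simps)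
  have "trace (A x ** hess F x) = (\<Sum>i\<in>UNIV. \<Sum>k\<in>UNIV. A x $ i $ k * hess F x $ k $ i)"
    by (simp add: trace_def matrix_matrix_mult_def)
  also have "\<dots> = (\<Sum>i\<in>UNIV. \<Sum>k\<in>UNIV. A x $ i $ k * (2 * (if k = i then 1 else 0) * p1 + 4 * v$k * v$i * p2))"
    by (simp only: H)
  also have "\<dots> = (\<Sum>i\<in>UNIV. 2 * p1 * A x $ i $ i + 4 * p2 * (\<Sum>k\<in>UNIV. A x $ i $ k * v $ k * v $ i))"
  proof -
    have e: "A x$i$k * (2 * (if k = i then 1 else 0) * p1 + 4 * v$k * v$i * p2) = (if k = i then 2 * p1 * A x$i$i else 0) + 4 * p2 * (A x$i$k * v$k * v$i)" for i k
      by (auto simp: algebra_simps)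
    show ?thesis by (simp only: e sum.distrib sum.delta) (simp add: sum_distrib_left)
  qed
  also have "\<dots> = 2 * p1 * trace (A x) + 4 * p2 * (\<Sum>i\<in>UNIV. \<Sum>k\<in>UNIV. A x $ i $ k * v $ k * v $ i)"
    by (simp add: trace_def sum.distrib mult.assoc flip: sum_distrib_left)
  finally have t: "trace (A x ** hess F x) = \<dots>" .
  have g: "inner (b x) (grad F x) = 2 * p1 * inner (b x) v"
    by (simp add: Gr inner_vec_def sum_distrib_left algebra_simps)
  show ?thesis unfolding gen_op_def F_def[symmetric] t g by (simp add: p1_def p2_def v_def algebra_simps)
qed

lemma borel_measurable_vec_nth'[measurable (raw)]:
  fixes f :: "'a \<Rightarrow> 'b::real_normed_vector^'n::finite"
  assumes "f \<in> borel_measurable M"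
  shows "(\<lambda>x. f x $ i) \<in> borel_measurable M"
proof -
  have "(\<lambda>y::'b^'n. y $ i) \<in> borel_measurable borel"
    by (intro borel_measurable_continuous_onI linear_continuous_on bounded_linear_vec_nth)
  from measurable_compose[OF assms this] show ?thesis .
qed

lemma Fn_Dset:
  "(\<lambda>x. phi R (inner (x - z) (x - z))) \<in> Dset z R"
proof -
  have e: "(\<lambda>x. phi R (inner (x - z) (x - z))) =
     (\<lambda>x. (exp 1 * (\<Sum>i\<in>UNIV. (x $ i + (- z $ i)) * (x $ i + (- z $ i)))) * G 0 (1 - inner (x - z) (x - z) / R^2))"
    by (auto simp: phi_def inner_vec_def)
  show ?thesis unfolding e
    by (intro Dset.intros Dset_sum) auto
qed

lemma Fn_test_fun:
  assumes "R \<noteq> 0"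
  shows "test_fun (\<lambda>x::real^'n::finite. phi R (inner (x - z) (x - z)))"
  unfolding test_fun_def
proof
  show "smooth (\<lambda>x::real^'n::finite. phi R (inner (x - z) (x - z)))"
    by (rule Dset_smooth[OF Fn_Dset])
  have sub: "{x. phi R (inner (x - z) (x - z)) \<noteq> 0} \<subseteq> cball z \<bar>R\<bar>"
  proof
    fix x assume x: "x \<in> {x. phi R (inner (x - z) (x - z)) \<noteq> 0}"
    show "x \<in> cball z \<bar>R\<bar>"
    proof (rule ccontr)
      assume "x \<notin> cball z \<bar>R\<bar>"
      then have "\<bar>R\<bar> < norm (x - z)" by (simp add: dist_norm norm_minus_commute)
      then have "\<bar>R\<bar>^2 < norm (x - z) ^ 2"
        by (intro power_strict_mono) auto
      then have "R^2 < norm (x - z) ^ 2" by simp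
      then have "R^2 < inner (x - z) (x - z)" by (simp add: power2_norm_eq_inner)
      then have "1 - inner (x - z) (x - z) / R^2 \<le> 0" using assms by (simp add: field_simps)
      then show False using x by (simp add: phi_def)
    qed
  qed
  have "closure {x. phi R (inner (x - z) (x - z)) \<noteq> 0} \<subseteq> cball z \<bar>R\<bar>"
    by (rule closure_minimal[OF sub closed_cball])
  then have e: "cball z \<bar>R\<bar> \<inter> closure {x. phi R (inner (x - z) (x - z)) \<noteq> 0} = closure {x. phi R (inner (x - z) (x - z)) \<noteq> 0}"
    by (rule Int_absorb1)
  have "compact (cball z \<bar>R\<bar> \<inter> closure {x. phi R (inner (x - z) (x - z)) \<noteq> 0})"
    by (rule compact_Int_closed[OF compact_cball closed_closure])
  then show "compact (closure {x::real^'n. phi R (inner (x - z) (x - z)) \<noteq> 0})"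
    unfolding e .
qed

lemma isCont_G: "isCont (G k) s"
  by (rule DERIV_isCont[OF G_deriv])

lemma G_bounded: "\<exists>M. \<forall>s\<le>1. \<bar>G k s\<bar> \<le> M"
proof -
  have "continuous_on {0..1} (G k)"
    by (intro continuous_at_imp_continuous_on ballI isCont_G)
  then have "compact (G k ` {0..1})" by (intro compact_continuous_image) auto
  then obtain M where M: "\<forall>y\<in>G k ` {0..1}. norm y \<le> M"
    using compact_imp_bounded bounded_iff by metis
  show ?thesis
  proof (intro exI allI impI)
    fix s :: real assume "s \<le> 1"
    show "\<bar>G k s\<bar> \<le> M"
    proof (cases "s < 0")
      case True
      have "0 \<in> G k ` {0..1}" using imageI[of "0::real" "{0..1}" "G k"] by simp
      then have "0 \<le> M" using M by fastforce
      then show ?thesis using True by simp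
    next
      case False then show ?thesis using M \<open>s \<le> 1\<close> by auto
    qed
  qed
qed

lemma trace_sq: "trace ((S::real^'m::finite^'n::finite) ** transpose S) = norm S ^ 2"
proof -
  have "norm S ^ 2 = (\<Sum>i\<in>UNIV. \<Sum>l\<in>UNIV. S$i$l * S$i$l)"
    by (simp add: power2_norm_eq_inner inner_vec_def)
  then show ?thesis by (simp add: trace_def matrix_matrix_mult_def transpose_def)
qed

lemma entry_le_norm: "\<bar>(S::real^'m::finite^'n::finite) $ i $ l\<bar> \<le> norm S"
  using component_le_norm_cart[of "S$i" l] Finite_Cartesian_Product.norm_nth_le[of S i] by simp

lemma Q_bound:
  fixes S :: "real^'m::finite^'n::finite" and v :: "real^'n"
  shows "\<bar>\<Sum>i\<in>UNIV. \<Sum>k\<in>UNIV. (S ** transpose S) $ i $ k * v $ k * v $ i\<bar>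
     \<le> real CARD('n) * (real CARD('n) * (real CARD('m) * (norm S ^ 2 * norm v ^ 2)))"
proof -
  have A: "\<bar>(S ** transpose S) $ i $ k\<bar> \<le> real CARD('m) * norm S ^ 2" for i k
  proof -
    have "\<bar>(S ** transpose S) $ i $ k\<bar> = \<bar>\<Sum>l\<in>UNIV. S$i$l * S$k$l\<bar>"
      by (simp add: matrix_matrix_mult_def transpose_def)
    also have "\<dots> \<le> (\<Sum>l\<in>UNIV. \<bar>S$i$l * S$k$l\<bar>)" by (rule sum_abs)
    also have "\<dots> \<le> (\<Sum>l\<in>(UNIV::'m set). norm S ^ 2)"
    proof (rule sum_mono)
      fix l
      have "\<bar>S$i$l\<bar> * \<bar>S$k$l\<bar> \<le> norm S * norm S"
        by (rule mult_mono[OF entry_le_norm entry_le_norm]) auto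
      then show "\<bar>S$i$l * S$k$l\<bar> \<le> norm S ^ 2" by (simp add: abs_mult power2_eq_square)
    qed
    finally show ?thesis by simp
  qed
  have T: "\<bar>(S ** transpose S) $ i $ k * v $ k * v $ i\<bar> \<le> real CARD('m) * (norm S ^ 2 * norm v ^ 2)" for i k
  proof -
    have "\<bar>v $ k\<bar> \<le> norm v" "\<bar>v $ i\<bar> \<le> norm v"
      using component_le_norm_cart[of v k] component_le_norm_cart[of v i] by simp_all
    then have "\<bar>v $ k\<bar> * \<bar>v $ i\<bar> \<le> norm v * norm v"
      by (intro mult_mono) auto
    then have "\<bar>v $ k * v $ i\<bar> \<le> norm v ^ 2"
      by (simp add: abs_mult power2_eq_square)
    then have "\<bar>(S ** transpose S) $ i $ k\<bar> * \<bar>v $ k * v $ i\<bar> \<le> (real CARD('m) * norm S ^ 2) * norm v ^ 2"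
      using A by (intro mult_mono) (auto intro: mult_nonneg_nonneg)
    then show ?thesis by (simp add: abs_mult mult.assoc)
  qed
  have "\<bar>\<Sum>i\<in>UNIV. \<Sum>k\<in>UNIV. (S ** transpose S) $ i $ k * v $ k * v $ i\<bar>
      \<le> (\<Sum>i\<in>(UNIV::'n set). \<Sum>k\<in>(UNIV::'n set). real CARD('m) * (norm S ^ 2 * norm v ^ 2))"
    by (rule order_trans[OF sum_abs sum_mono], rule order_trans[OF sum_abs sum_mono], rule T)
  then show ?thesis by simp
qed

lemma G_measurable[measurable (raw)]:
  "f \<in> borel_measurable M \<Longrightarrow> (\<lambda>x. G k (f x)) \<in> borel_measurable M"
proof -
  assume f: "f \<in> borel_measurable M"
  have "G k \<in> borel_measurable borel"
    by (intro borel_measurable_continuous_onI continuous_at_imp_continuous_on isCont_G ballI)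
  from measurable_compose[OF f this] show ?thesis .
qed

lemma AA_entry: "(S ** transpose S) $ i $ k = (\<Sum>l\<in>UNIV. (S::real^'m::finite^'n::finite) $ i $ l * S $ k $ l)"
  by (simp add: matrix_matrix_mult_def transpose_def)

lemma G_bounds: "\<exists>M. 0 \<le> M \<and> (\<forall>s\<le>1. \<bar>G k s\<bar> \<le> M)"
proof -
  obtain M where M: "\<forall>s\<le>1. \<bar>G k s\<bar> \<le> M" using G_bounded by blast
  then have "0 \<le> M" using M[rule_format, of 0] by simp
  with M show ?thesis by blast
qed

lemma abs_aux1: "0 \<le> (t::real) \<Longrightarrow> \<bar>a - t * c\<bar> \<le> \<bar>a\<bar> + t * \<bar>c\<bar>"
  using abs_triangle_ineq4[of a "t*c"] by (simp add: abs_mult)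

lemma abs_aux2: "0 \<le> (t::real) \<Longrightarrow> \<bar>- 2 * a + t * (- 2 * b + c)\<bar> \<le> 2 * \<bar>a\<bar> + t * (2 * \<bar>b\<bar> + \<bar>c\<bar>)"
proof -
  assume t: "0 \<le> t"
  have "\<bar>- 2 * b + c\<bar> \<le> 2 * \<bar>b\<bar> + \<bar>c\<bar>" by (simp add: abs_triangle_ineq4 order_trans[OF abs_triangle_ineq] abs_mult)
  then have "t * \<bar>- 2 * b + c\<bar> \<le> t * (2 * \<bar>b\<bar> + \<bar>c\<bar>)" using t by (rule mult_left_mono)
  moreover have "\<bar>- 2 * a + t * (- 2 * b + c)\<bar> \<le> 2 * \<bar>a\<bar> + t * \<bar>- 2 * b + c\<bar>"
    using abs_triangle_ineq[of "- 2 * a" "t * (- 2 * b + c)"] t by (simp add: abs_mult)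
  ultimately show ?thesis by linarith
qed

lemma abs_aux3: "0 \<le> (r::real) \<Longrightarrow> \<bar>exp 1 / R^2 * X\<bar> * r = exp 1 * (r / R^2) * \<bar>X\<bar>"
  by (simp add: abs_mult)

lemma phi1_bound:
  assumes "R \<noteq> 0" "0 \<le> r" "\<forall>s\<le>1. \<bar>G 0 s\<bar> \<le> M0" "\<forall>s\<le>1. \<bar>G 2 s\<bar> \<le> M2" "0 \<le> M0" "0 \<le> M2"
  shows "\<bar>phi1 R r\<bar> \<le> exp 1 * (M0 + M2)"
proof (cases "1 - r / R^2 \<le> 0")
  case True then show ?thesis using assms by (simp add: phi1_def)
next
  case False
  have q1: "1 - r / R^2 \<le> 1" using assms by simp
  have t: "0 \<le> r / R^2" "r / R^2 \<le> 1" using assms False by auto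
  have "\<bar>G 0 (1 - r / R^2) - r / R^2 * G 2 (1 - r / R^2)\<bar> \<le> \<bar>G 0 (1 - r / R^2)\<bar> + r / R^2 * \<bar>G 2 (1 - r / R^2)\<bar>"
    using t(1) by (rule abs_aux1)
  also have "\<dots> \<le> M0 + 1 * M2"
    using assms(3,4) q1 t by (intro add_mono mult_mono) auto
  finally show ?thesis by (simp add: phi1_def abs_mult)
qed

lemma phi2_bound:
  assumes "R \<noteq> 0" "0 \<le> r" "\<forall>s\<le>1. \<bar>G 2 s\<bar> \<le> M2" "\<forall>s\<le>1. \<bar>G 3 s\<bar> \<le> M3" "\<forall>s\<le>1. \<bar>G 4 s\<bar> \<le> M4"
    "0 \<le> M2" "0 \<le> M3" "0 \<le> M4"
  shows "\<bar>phi2 R r\<bar> * r \<le> exp 1 * (2 * M2 + 2 * M3 + M4)"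
proof (cases "1 - r / R^2 \<le> 0")
  case True then show ?thesis using assms by (simp add: phi2_def)
next
  case False
  let ?q = "1 - r / R^2"
  have q1: "?q \<le> 1" using assms by simp
  have t: "0 \<le> r / R^2" "r / R^2 \<le> 1" using assms False by auto
  have e: "\<bar>phi2 R r\<bar> * r = exp 1 * (r / R^2) * \<bar>- 2 * G 2 ?q + r / R^2 * (- 2 * G 3 ?q + G 4 ?q)\<bar>"
    unfolding phi2_def using assms(2) by (rule abs_aux3)
  have "\<bar>- 2 * G 2 ?q + r / R^2 * (- 2 * G 3 ?q + G 4 ?q)\<bar> \<le> 2 * \<bar>G 2 ?q\<bar> + r / R^2 * (2 * \<bar>G 3 ?q\<bar> + \<bar>G 4 ?q\<bar>)"
    using t(1) by (rule abs_aux2)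
  also have "\<dots> \<le> 2 * M2 + 1 * (2 * M3 + M4)"
    using assms q1 t by (intro add_mono mult_mono mult_left_mono) auto
  finally have X: "\<bar>- 2 * G 2 ?q + r / R^2 * (- 2 * G 3 ?q + G 4 ?q)\<bar> \<le> 2 * M2 + 2 * M3 + M4" by simp
  have "exp 1 * (r / R^2) * \<bar>- 2 * G 2 ?q + r / R^2 * (- 2 * G 3 ?q + G 4 ?q)\<bar> \<le> exp 1 * 1 * (2 * M2 + 2 * M3 + M4)"
    using t X by (intro mult_mono) auto
  then show ?thesis unfolding e by simp
qed

lemma lim_phi:
  fixes r :: real
  defines "R \<equiv> \<lambda>n::nat. real (Suc n)"
  shows "(\<lambda>n. phi1 (R n) r) \<longlonglongrightarrow> 1" and "(\<lambda>n. phi2 (R n) r) \<longlonglongrightarrow> 0"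
proof -
  have inv: "(\<lambda>n. inverse (real (Suc n))) \<longlonglongrightarrow> 0" by (rule LIMSEQ_inverse_real_of_nat)
  have c0: "(\<lambda>n. c / R n ^ 2) \<longlonglongrightarrow> 0" for c :: real
  proof -
    have "(\<lambda>n. c * inverse (real (Suc n)) ^ 2) \<longlonglongrightarrow> c * 0 ^ 2"
      by (intro tendsto_intros inv)
    then show ?thesis by (simp add: R_def field_simps power_inverse)
  qed
  have q: "(\<lambda>n. 1 - r / R n ^ 2) \<longlonglongrightarrow> 1"
    using tendsto_diff[OF tendsto_const c0[of r]] by simp
  have g: "(\<lambda>n. G k (1 - r / R n ^ 2)) \<longlonglongrightarrow> G k 1" for k
    by (rule isCont_tendsto_compose[OF isCont_G q])
  have "(\<lambda>n. exp 1 * (G 0 (1 - r / R n ^ 2) - r / R n ^ 2 * G 2 (1 - r / R n ^ 2))) \<longlonglongrightarrow> exp 1 * (G 0 1 - 0 * G 2 1)"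
    by (intro tendsto_intros g c0)
  then show "(\<lambda>n. phi1 (R n) r) \<longlonglongrightarrow> 1"
    by (simp add: phi1_def G_def exp_minus)
  have "(\<lambda>n. exp 1 / R n ^ 2 * (- 2 * G 2 (1 - r / R n ^ 2) + r / R n ^ 2 * (- 2 * G 3 (1 - r / R n ^ 2) + G 4 (1 - r / R n ^ 2))))
      \<longlonglongrightarrow> 0 * (- 2 * G 2 1 + 0 * (- 2 * G 3 1 + G 4 1))"
    by (intro tendsto_intros g c0)
  then show "(\<lambda>n. phi2 (R n) r) \<longlonglongrightarrow> 0"
    by (simp add: phi2_def)
qed

lemma key_identity:
  fixes S :: "real^'n::finite \<Rightarrow> real^'m::finite^'n" and b :: "real^'n \<Rightarrow> real^'n" and z :: "real^'n"
  assumes ps: "prob_solution (\<lambda>x. S x ** transpose (S x)) b \<mu>"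
    and Sm[measurable]: "S \<in> borel_measurable borel" and bm[measurable]: "b \<in> borel_measurable borel"
    and I1: "integrable \<mu> (\<lambda>x. norm (S x) ^ 2)"
    and I2: "integrable \<mu> (\<lambda>x. norm (b x) * norm x)"
    and I3: "integrable \<mu> (\<lambda>x. norm (b x))"
  shows "(\<integral>x. norm (S x) ^ 2 + inner (b x) (x - z) \<partial>\<mu>) = 0"
proof -
  let ?A = "\<lambda>x. S x ** transpose (S x)"
  define R where "R n = real (Suc n)" for n
  define Q where "Q x = (\<Sum>i\<in>UNIV. \<Sum>k\<in>UNIV. ?A x $ i $ k * (x - z) $ k * (x - z) $ i)" for x
  define s where "s n x = 2 * phi1 (R n) (inner (x - z) (x - z)) * (norm (S x)^2 + inner (b x) (x - z))
      + 4 * phi2 (R n) (inner (x - z) (x - z)) * Q x" for n x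
  define f where "f x = 2 * (norm (S x)^2 + inner (b x) (x - z))" for x
  have Rnz: "R n \<noteq> 0" for n by (simp add: R_def)
  have sets: "sets \<mu> = sets borel" and ps_int: "\<And>g. test_fun g \<Longrightarrow> (\<integral>x. gen_op ?A b g x \<partial>\<mu>) = 0"
    using ps by (auto simp: prob_solution_def)
  have meq: "borel_measurable \<mu> = borel_measurable borel"
    by (rule measurable_cong_sets[OF sets refl])
  have s_eq: "gen_op ?A b (\<lambda>x. phi (R n) (inner (x - z) (x - z))) x = s n x" for n x
    unfolding gen_op_fz[OF Rnz] s_def Q_def trace_sq by simp
  have int0: "(\<integral>x. s n x \<partial>\<mu>) = 0" for n
    using ps_int[OF Fn_test_fun[OF Rnz, of n z]] by (simp add: s_eq)
  obtain M0 where M0: "0 \<le> M0" "\<forall>s\<le>1. \<bar>G 0 s\<bar> \<le> M0" using G_bounds by blast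
  obtain M2 where M2: "0 \<le> M2" "\<forall>s\<le>1. \<bar>G 2 s\<bar> \<le> M2" using G_bounds by blast
  obtain M3 where M3: "0 \<le> M3" "\<forall>s\<le>1. \<bar>G 3 s\<bar> \<le> M3" using G_bounds by blast
  obtain M4 where M4: "0 \<le> M4" "\<forall>s\<le>1. \<bar>G 4 s\<bar> \<le> M4" using G_bounds by blast
  define K1 where "K1 = exp 1 * (M0 + M2)"
  define K2 where "K2 = exp 1 * (2 * M2 + 2 * M3 + M4)"
  define C where "C = real CARD('n) * (real CARD('n) * real CARD('m))"
  have K1: "0 \<le> K1" using M0 M2 by (simp add: K1_def)
  have K2: "0 \<le> K2" using M2 M3 M4 by (simp add: K2_def)
  have C: "0 \<le> C" by (simp add: C_def)
  define w where "w x = 2 * K1 * (norm (S x)^2 + norm (b x) * norm x + norm z * norm (b x)) + 4 * (K2 * (C * norm (S x) ^ 2))" for x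
  have rpos: "0 \<le> inner (x - z) (x - z)" for x by simp
  have bound: "norm (s n x) \<le> w x" for n x
  proof -
    let ?r = "inner (x - z) (x - z)"
    have p1: "\<bar>phi1 (R n) ?r\<bar> \<le> K1"
      unfolding K1_def by (rule phi1_bound[OF Rnz rpos M0(2) M2(2) M0(1) M2(1)])
    have p2: "\<bar>phi2 (R n) ?r\<bar> * ?r \<le> K2"
      unfolding K2_def by (rule phi2_bound[OF Rnz rpos M2(2) M3(2) M4(2) M2(1) M3(1) M4(1)])
    have Qb: "\<bar>Q x\<bar> \<le> C * (norm (S x) ^ 2 * ?r)"
      using Q_bound[of "S x" "x - z"] by (simp add: Q_def C_def power2_norm_eq_inner mult.assoc)
    have ib: "\<bar>inner (b x) (x - z)\<bar> \<le> norm (b x) * norm x + norm z * norm (b x)"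
    proof -
      have "\<bar>inner (b x) (x - z)\<bar> \<le> norm (b x) * norm (x - z)" by (rule Cauchy_Schwarz_ineq2)
      also have "\<dots> \<le> norm (b x) * (norm x + norm z)" by (intro mult_left_mono norm_triangle_ineq4) auto
      finally show ?thesis by (simp add: algebra_simps)
    qed
    have t1: "\<bar>2 * phi1 (R n) ?r * (norm (S x)^2 + inner (b x) (x - z))\<bar> \<le> 2 * K1 * (norm (S x)^2 + norm (b x) * norm x + norm z * norm (b x))"
    proof -
      have "\<bar>norm (S x)^2 + inner (b x) (x - z)\<bar> \<le> norm (S x)^2 + norm (b x) * norm x + norm z * norm (b x)"
        using ib zero_le_power2[of "norm (S x)"] unfolding abs_le_iff by linarith
      then have "\<bar>phi1 (R n) ?r\<bar> * \<bar>norm (S x)^2 + inner (b x) (x - z)\<bar> \<le> K1 * (norm (S x)^2 + norm (b x) * norm x + norm z * norm (b x))"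
        using p1 by (intro mult_mono) auto
      then show ?thesis by (simp add: abs_mult)
    qed
    have t2: "\<bar>4 * phi2 (R n) ?r * Q x\<bar> \<le> 4 * (K2 * (C * norm (S x) ^ 2))"
    proof -
      have "\<bar>phi2 (R n) ?r\<bar> * \<bar>Q x\<bar> \<le> \<bar>phi2 (R n) ?r\<bar> * (C * (norm (S x) ^ 2 * ?r))"
        using Qb by (intro mult_left_mono) auto
      also have "\<dots> = (\<bar>phi2 (R n) ?r\<bar> * ?r) * (C * norm (S x) ^ 2)" by (simp add: algebra_simps)
      also have "\<dots> \<le> K2 * (C * norm (S x) ^ 2)"
        using p2 C by (intro mult_right_mono) auto
      finally show ?thesis by (simp add: abs_mult)
    qed
    show ?thesis unfolding s_def w_def real_norm_def
      using t1 t2 abs_triangle_ineq[of "2 * phi1 (R n) (inner (x - z) (x - z)) * (norm (S x)^2 + inner (b x) (x - z))" "4 * phi2 (R n) (inner (x - z) (x - z)) * Q x"]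
      by linarith
  qed
  have lim: "(\<lambda>n. s n x) \<longlonglongrightarrow> f x" for x
  proof -
    have "(\<lambda>n. s n x) \<longlonglongrightarrow> 2 * 1 * (norm (S x)^2 + inner (b x) (x - z)) + 4 * 0 * Q x"
      unfolding s_def R_def by (intro tendsto_intros lim_phi)
    then show ?thesis by (simp add: f_def)
  qed
  have Qm[measurable]: "Q \<in> borel_measurable borel"
    unfolding Q_def AA_entry by measurable
  have sm: "s n \<in> borel_measurable borel" for n
    unfolding s_def phi1_def phi2_def by measurable
  have fm: "f \<in> borel_measurable borel"
    unfolding f_def by measurable
  have wi: "integrable \<mu> w"
  proof -
    have "integrable \<mu> (\<lambda>x. norm (S x)^2 + norm (b x) * norm x + norm z * norm (b x))"
      using I1 I2 I3 by auto
    then have a: "integrable \<mu> (\<lambda>x. 2 * K1 * (norm (S x)^2 + norm (b x) * norm x + norm z * norm (b x)))"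
      by auto
    have "integrable \<mu> (\<lambda>x. 4 * (K2 * (C * norm (S x)^2)))"
      using I1 by auto
    from Bochner_Integration.integrable_add[OF a this] show ?thesis unfolding w_def .
  qed
  have "(\<lambda>n. integral\<^sup>L \<mu> (s n)) \<longlonglongrightarrow> integral\<^sup>L \<mu> f"
    by (rule integral_dominated_convergence[where w=w]) (use fm sm meq wi lim bound in auto)
  then have "integral\<^sup>L \<mu> f = 0"
    using int0 by (simp add: LIMSEQ_const_iff)
  moreover have "integral\<^sup>L \<mu> f = 2 * (\<integral>x. norm (S x) ^ 2 + inner (b x) (x - z) \<partial>\<mu>)"
    unfolding f_def by (rule integral_mult_right_zero)
  ultimately show ?thesis by simp
qed

lemma le_1_sq: "(t::real) \<le> 1 + t^2"
proof -
  have h: "(t - 1)^2 = t^2 - 2*t + 1" by (simp add: power2_eq_square algebra_simps)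
  show ?thesis using h zero_le_power2[of "t - 1"] zero_le_power2[of t] by linarith
qed

lemma sq_sum_le: "((a::real) + c)^2 \<le> 2 * a^2 + 2 * c^2"
proof -
  have h: "(a + c)^2 = a^2 + c^2 + 2*a*c" "(a - c)^2 = a^2 + c^2 - 2*a*c" by (simp_all add: power2_eq_square algebra_simps)
  show ?thesis using h zero_le_power2[of "a - c"] by linarith
qed

lemma sol_facts:
  fixes S :: "real^'n::finite \<Rightarrow> real^'m::finite^'n" and b :: "real^'n \<Rightarrow> real^'n" and lam :: real
  assumes ps: "prob_solution (\<lambda>x. S x ** transpose (S x)) b \<mu>"
    and Sm[measurable]: "S \<in> borel_measurable borel" and bm[measurable]: "b \<in> borel_measurable borel"
    and lam: "lam > 0"
    and tr: "\<And>x y. x \<noteq> y \<Longrightarrow> trace ((S x - S y) ** transpose (S x - S y)) > lam * (norm (x - y))\<^sup>2"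
    and mom: "(\<integral>\<^sup>+ x. ennreal ((norm (S x))\<^sup>2 + norm (b x) * norm x) \<partial>\<mu>) < \<infinity>"
  shows "integrable \<mu> (\<lambda>x. norm (S x) ^ 2)" "integrable \<mu> (\<lambda>x. norm (b x) * norm x)"
    "integrable \<mu> (\<lambda>x. norm (b x))" "integrable \<mu> (\<lambda>x. norm x)"
    "integrable \<mu> S" "integrable \<mu> (\<lambda>x. x)" "integrable \<mu> b"
proof -
  have sets: "sets \<mu> = sets borel" and P: "prob_space \<mu>"
    and loc: "\<And>K. compact K \<Longrightarrow> (\<forall>i. set_integrable \<mu> K (\<lambda>x. b x $ i))"
    using ps by (auto simp: prob_solution_def)
  interpret P: prob_space \<mu> by (rule P)
  have meq: "borel_measurable \<mu> = borel_measurable borel"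
    by (rule measurable_cong_sets[OF sets refl])
  have meq2: "measurable \<mu> (borel :: ('x::topological_space) measure) = measurable borel borel"
    by (rule measurable_cong_sets[OF sets refl])
  show I1: "integrable \<mu> (\<lambda>x. norm (S x) ^ 2)"
  proof (rule integrableI_bounded)
    show "(\<lambda>x. norm (S x) ^ 2) \<in> borel_measurable \<mu>" unfolding meq by measurable
    have "(\<integral>\<^sup>+ x. ennreal (norm (norm (S x) ^ 2)) \<partial>\<mu>) \<le> (\<integral>\<^sup>+ x. ennreal ((norm (S x))\<^sup>2 + norm (b x) * norm x) \<partial>\<mu>)"
      by (intro nn_integral_mono ennreal_leI) auto
    then show "(\<integral>\<^sup>+ x. ennreal (norm (norm (S x) ^ 2)) \<partial>\<mu>) < \<infinity>" using mom by (rule le_less_trans)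
  qed
  show I2: "integrable \<mu> (\<lambda>x. norm (b x) * norm x)"
  proof (rule integrableI_bounded)
    show "(\<lambda>x. norm (b x) * norm x) \<in> borel_measurable \<mu>" unfolding meq by measurable
    have "(\<integral>\<^sup>+ x. ennreal (norm (norm (b x) * norm x)) \<partial>\<mu>) \<le> (\<integral>\<^sup>+ x. ennreal ((norm (S x))\<^sup>2 + norm (b x) * norm x) \<partial>\<mu>)"
      by (intro nn_integral_mono ennreal_leI) auto
    then show "(\<integral>\<^sup>+ x. ennreal (norm (norm (b x) * norm x)) \<partial>\<mu>) < \<infinity>" using mom by (rule le_less_trans)
  qed
  show I3: "integrable \<mu> (\<lambda>x. norm (b x))"
  proof -
    let ?K = "cball (0::real^'n) 1"
    have "integrable \<mu> (\<lambda>x. indicator ?K x *\<^sub>R b x $ i)" for i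
      using loc[of ?K] by (auto simp: set_integrable_def)
    then have "integrable \<mu> (\<lambda>x. \<bar>indicator ?K x *\<^sub>R b x $ i\<bar>)" for i
      by (rule integrable_abs)
    then have "integrable \<mu> (\<lambda>x. \<Sum>i\<in>UNIV. \<bar>indicator ?K x *\<^sub>R b x $ i\<bar>)"
      by (intro Bochner_Integration.integrable_sum) auto
    then have w: "integrable \<mu> (\<lambda>x. norm (b x) * norm x + (\<Sum>i\<in>UNIV. \<bar>indicator ?K x *\<^sub>R b x $ i\<bar>))"
      using I2 by (intro Bochner_Integration.integrable_add)
    show ?thesis
    proof (rule Bochner_Integration.integrable_bound[OF w])
      show "(\<lambda>x. norm (b x)) \<in> borel_measurable \<mu>" unfolding meq by measurable
      show "AE x in \<mu>. norm (norm (b x)) \<le> norm (norm (b x) * norm x + (\<Sum>i\<in>UNIV. \<bar>indicator ?K x *\<^sub>R b x $ i\<bar>))"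
      proof (intro AE_I2)
        fix x
        have s0: "0 \<le> (\<Sum>i\<in>UNIV. \<bar>indicator ?K x *\<^sub>R b x $ i\<bar>)" by (intro sum_nonneg) auto
        have p0: "0 \<le> norm (b x) * norm x" by simp
        have "norm (b x) \<le> norm (b x) * norm x + (\<Sum>i\<in>UNIV. \<bar>indicator ?K x *\<^sub>R b x $ i\<bar>)"
        proof (cases "x \<in> ?K")
          case True
          then have "(\<Sum>i\<in>UNIV. \<bar>indicator ?K x *\<^sub>R b x $ i\<bar>) = (\<Sum>i\<in>UNIV. \<bar>b x $ i\<bar>)" by simp
          then show ?thesis using norm_le_l1_cart[of "b x"] p0 by linarith
        next
          case False
          then have "1 \<le> norm x" by (simp add: dist_norm)
          then have "norm (b x) * 1 \<le> norm (b x) * norm x" by (intro mult_left_mono) auto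
          then show ?thesis using s0 by linarith
        qed
        then show "norm (norm (b x)) \<le> norm (norm (b x) * norm x + (\<Sum>i\<in>UNIV. \<bar>indicator ?K x *\<^sub>R b x $ i\<bar>))"
          using s0 p0 by simp
      qed
    qed
  qed
  have xb: "norm x ^ 2 \<le> (2 / lam) * norm (S x) ^ 2 + (2 / lam) * norm (S 0) ^ 2" for x
  proof (cases "x = 0")
    case True then show ?thesis using lam by simp
  next
    case False
    have "lam * norm x ^ 2 < norm (S x - S 0) ^ 2" using tr[OF False] by (simp add: trace_sq)
    also have "norm (S x - S 0) ^ 2 \<le> (norm (S x) + norm (S 0)) ^ 2"
      by (intro power_mono norm_triangle_ineq4) auto
    also have "\<dots> \<le> 2 * norm (S x) ^ 2 + 2 * norm (S 0) ^ 2"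
      by (rule sq_sum_le)
    finally have "lam * norm x ^ 2 < 2 * norm (S x) ^ 2 + 2 * norm (S 0) ^ 2" .
    then show ?thesis using lam by (simp add: field_simps)
  qed
  show I4: "integrable \<mu> (\<lambda>x. norm x)"
  proof -
    have w: "integrable \<mu> (\<lambda>x. 1 + ((2 / lam) * norm (S x) ^ 2 + (2 / lam) * norm (S 0) ^ 2))"
      using I1 by (intro Bochner_Integration.integrable_add P.integrable_const) auto
    show ?thesis
    proof (rule Bochner_Integration.integrable_bound[OF w])
      show "(\<lambda>x. norm x) \<in> borel_measurable \<mu>" unfolding meq by measurable
      show "AE x in \<mu>. norm (norm x) \<le> norm (1 + ((2 / lam) * norm (S x) ^ 2 + (2 / lam) * norm (S 0) ^ 2))"
      proof (intro AE_I2)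
        fix x :: "real^'n"
        have "norm x \<le> 1 + norm x ^ 2" by (rule le_1_sq)
        moreover have "0 \<le> (2 / lam) * norm (S x) ^ 2 + (2 / lam) * norm (S 0) ^ 2" using lam by simp
        ultimately show "norm (norm x) \<le> norm (1 + ((2 / lam) * norm (S x) ^ 2 + (2 / lam) * norm (S 0) ^ 2))"
          using xb[of x] by simp
      qed
    qed
  qed
  show "integrable \<mu> S"
  proof -
    have w: "integrable \<mu> (\<lambda>x. 1 + norm (S x) ^ 2)"
      using I1 by (intro Bochner_Integration.integrable_add P.integrable_const)
    show ?thesis
    proof (rule Bochner_Integration.integrable_bound[OF w])
      show "S \<in> borel_measurable \<mu>" unfolding meq2 by measurable
      show "AE x in \<mu>. norm (S x) \<le> norm (1 + norm (S x) ^ 2)"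
      proof (intro AE_I2)
        fix x
        have "norm (S x) \<le> 1 + norm (S x) ^ 2" by (rule le_1_sq)
        then show "norm (S x) \<le> norm (1 + norm (S x) ^ 2)" by simp
      qed
    qed
  qed
  show "integrable \<mu> (\<lambda>x. x)"
  proof (rule Bochner_Integration.integrable_bound[OF I4])
    show "(\<lambda>x. x) \<in> borel_measurable \<mu>" unfolding meq2 by measurable
  qed auto
  show "integrable \<mu> b"
  proof (rule Bochner_Integration.integrable_bound[OF I3])
    show "b \<in> borel_measurable \<mu>" unfolding meq2 by measurable
  qed auto
qed

lemma F_expand:
  fixes S :: "real^'n::finite \<Rightarrow> real^'m::finite^'n" and b :: "real^'n \<Rightarrow> real^'n"
  shows "norm (S x - S y)^2 + inner (x - y) (b x - b y) =
    (norm (S x)^2 + inner (b x) x) - 2 * inner (S x) (S y) - inner (b x) y + (norm (S y)^2 + inner (b y) (y - x))"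
  by (simp add: power2_norm_eq_inner inner_diff_left inner_diff_right inner_commute algebra_simps)

lemma pair_lemma:
  fixes S :: "real^'n::finite \<Rightarrow> real^'m::finite^'n" and b :: "real^'n \<Rightarrow> real^'n" and lam :: real
  assumes Sm[measurable]: "S \<in> borel_measurable borel" and bm[measurable]: "b \<in> borel_measurable borel"
    and lam: "lam > 0"
    and tr: "\<And>x y. x \<noteq> y \<Longrightarrow> trace ((S x - S y) ** transpose (S x - S y)) > lam * (norm (x - y))\<^sup>2"
    and Fpos: "\<And>x y. 0 \<le> norm (S x - S y)^2 + inner (x - y) (b x - b y)"
    and psm: "prob_solution (\<lambda>x. S x ** transpose (S x)) b \<mu>"
    and momm: "(\<integral>\<^sup>+ x. ennreal ((norm (S x))\<^sup>2 + norm (b x) * norm x) \<partial>\<mu>) < \<infinity>"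
    and psn: "prob_solution (\<lambda>x. S x ** transpose (S x)) b \<nu>"
    and momn: "(\<integral>\<^sup>+ x. ennreal ((norm (S x))\<^sup>2 + norm (b x) * norm x) \<partial>\<nu>) < \<infinity>"
  shows "(\<integral>\<^sup>+p. ennreal (norm (S (fst p) - S (snd p))^2 + inner (fst p - snd p) (b (fst p) - b (snd p))) \<partial>(\<mu> \<Otimes>\<^sub>M \<nu>))
      = ennreal (- 2 * inner (\<integral>x. S x \<partial>\<mu>) (\<integral>x. S x \<partial>\<nu>))"
    and "0 \<le> - 2 * inner (\<integral>x. S x \<partial>\<mu>) (\<integral>x. S x \<partial>\<nu>)"
proof -
  note fm = sol_facts[OF psm Sm bm lam tr momm]
  note fn = sol_facts[OF psn Sm bm lam tr momn]
  have setsm: "sets \<mu> = sets borel" and Pm: "prob_space \<mu>" using psm by (auto simp: prob_solution_def)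
  have setsn: "sets \<nu> = sets borel" and Pn: "prob_space \<nu>" using psn by (auto simp: prob_solution_def)
  interpret M: prob_space \<mu> by (rule Pm)
  interpret N: prob_space \<nu> by (rule Pn)
  have meqm: "borel_measurable \<mu> = borel_measurable borel" by (rule measurable_cong_sets[OF setsm refl])
  have meqn: "borel_measurable \<nu> = borel_measurable borel" by (rule measurable_cong_sets[OF setsn refl])
  define m\<mu> where "m\<mu> = (\<integral>x. S x \<partial>\<mu>)"
  define m\<nu> where "m\<nu> = (\<integral>x. S x \<partial>\<nu>)"
  define e\<nu> where "e\<nu> = (\<integral>x. x \<partial>\<nu>)"
  define F where "F x y = norm (S x - S y)^2 + inner (x - y) (b x - b y)" for x y
  define g where "g x = (norm (S x)^2 + inner (b x) (x - e\<nu>)) - 2 * inner (S x) m\<nu>" for x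
  have ibn: "integrable \<nu> (\<lambda>y. inner (b y) y)"
  proof (rule Bochner_Integration.integrable_bound[OF fn(2)])
    show "(\<lambda>y. inner (b y) y) \<in> borel_measurable \<nu>" unfolding meqn by measurable
    show "AE y in \<nu>. norm (inner (b y) y) \<le> norm (norm (b y) * norm y)"
      by (intro AE_I2) (simp add: Cauchy_Schwarz_ineq2)
  qed
  have ibm: "integrable \<mu> (\<lambda>y. inner (b y) y)"
  proof (rule Bochner_Integration.integrable_bound[OF fm(2)])
    show "(\<lambda>y. inner (b y) y) \<in> borel_measurable \<mu>" unfolding meqm by measurable
    show "AE y in \<mu>. norm (inner (b y) y) \<le> norm (norm (b y) * norm y)"
      by (intro AE_I2) (simp add: Cauchy_Schwarz_ineq2)
  qed
  have inner_int: "(\<integral>y. F x y \<partial>\<nu>) = g x" for x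
  proof -
    let ?c = "norm (S x)^2 + inner (b x) x"
    have h0: "(\<integral>y. norm (S y)^2 + inner (b y) (y - x) \<partial>\<nu>) = 0"
      by (rule key_identity[OF psn Sm bm fn(1) fn(2) fn(3)])
    have hi: "integrable \<nu> (\<lambda>y. norm (S y)^2 + inner (b y) (y - x))"
    proof -
      have "integrable \<nu> (\<lambda>y. norm (S y)^2 + (inner (b y) y - inner (b y) x))"
        using fn(1) ibn fn(7) by (intro Bochner_Integration.integrable_add Bochner_Integration.integrable_diff integrable_inner_left) auto
      then show ?thesis by (simp add: inner_diff_right)
    qed
    have i2: "integrable \<nu> (\<lambda>y. 2 * inner (S x) (S y))" using fn(5) by auto
    have i3: "integrable \<nu> (\<lambda>y. inner (b x) y)" using fn(6) by auto
    have "(\<integral>y. F x y \<partial>\<nu>) = (\<integral>y. ?c - 2 * inner (S x) (S y) - inner (b x) y + (norm (S y)^2 + inner (b y) (y - x)) \<partial>\<nu>)"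
      unfolding F_def F_expand ..
    also have "\<dots> = (\<integral>y. ?c \<partial>\<nu>) - (\<integral>y. 2 * inner (S x) (S y) \<partial>\<nu>) - (\<integral>y. inner (b x) y \<partial>\<nu>) + (\<integral>y. norm (S y)^2 + inner (b y) (y - x) \<partial>\<nu>)"
      using i2 i3 hi by (simp add: Bochner_Integration.integral_add Bochner_Integration.integral_diff Bochner_Integration.integrable_diff)
    also have "\<dots> = ?c - 2 * inner (S x) m\<nu> - inner (b x) e\<nu>"
      using h0 fn(5) fn(6) by (simp add: m\<nu>_def e\<nu>_def N.prob_space)
    also have "\<dots> = g x" by (simp add: g_def inner_diff_right)
    finally show ?thesis .
  qed
  have Fm: "(\<lambda>y. F x y) \<in> borel_measurable \<nu>" for x unfolding meqn F_def by measurable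
  have Fi: "integrable \<nu> (\<lambda>y. F x y)" for x
  proof -
    have "integrable \<nu> (\<lambda>y. (norm (S x)^2 + inner (b x) x) - 2 * inner (S x) (S y) - inner (b x) y + (norm (S y)^2 + (inner (b y) y - inner (b y) x)))"
      using fn(1) fn(5) fn(6) fn(7) ibn
      by (intro Bochner_Integration.integrable_add Bochner_Integration.integrable_diff integrable_inner_left integrable_inner_right integrable_mult_right N.integrable_const) auto
    then show ?thesis unfolding F_def F_expand by (simp add: inner_diff_right)
  qed
  have gpos: "0 \<le> g x" for x
    unfolding inner_int[symmetric] using Fpos by (simp add: F_def)
  have gi: "integrable \<mu> g"
  proof -
    have "integrable \<mu> (\<lambda>x. (norm (S x)^2 + (inner (b x) x - inner (b x) e\<nu>)) - 2 * inner (S x) m\<nu>)"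
      using fm(1) fm(5) fm(7) ibm
      by (intro Bochner_Integration.integrable_add Bochner_Integration.integrable_diff integrable_inner_left integrable_mult_right) auto
    then show ?thesis unfolding g_def by (simp add: inner_diff_right)
  qed
  have gint: "(\<integral>x. g x \<partial>\<mu>) = - 2 * inner m\<mu> m\<nu>"
  proof -
    have h0: "(\<integral>x. norm (S x)^2 + inner (b x) (x - e\<nu>) \<partial>\<mu>) = 0"
      by (rule key_identity[OF psm Sm bm fm(1) fm(2) fm(3)])
    have hi: "integrable \<mu> (\<lambda>x. norm (S x)^2 + inner (b x) (x - e\<nu>))"
    proof -
      have "integrable \<mu> (\<lambda>y. norm (S y)^2 + (inner (b y) y - inner (b y) e\<nu>))"
        using fm(1) ibm fm(7) by (intro Bochner_Integration.integrable_add Bochner_Integration.integrable_diff integrable_inner_left) auto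
      then show ?thesis by (simp add: inner_diff_right)
    qed
    have i2: "integrable \<mu> (\<lambda>x. 2 * inner (S x) m\<nu>)" using fm(5) by auto
    have "(\<integral>x. g x \<partial>\<mu>) = (\<integral>x. norm (S x)^2 + inner (b x) (x - e\<nu>) \<partial>\<mu>) - (\<integral>x. 2 * inner (S x) m\<nu> \<partial>\<mu>)"
      unfolding g_def using hi i2 by (rule Bochner_Integration.integral_diff)
    also have "\<dots> = - 2 * inner m\<mu> m\<nu>"
      using h0 fm(5) by (simp add: m\<mu>_def)
    finally show ?thesis .
  qed
  show "0 \<le> - 2 * inner (\<integral>x. S x \<partial>\<mu>) (\<integral>x. S x \<partial>\<nu>)"
  proof -
    have "0 \<le> (\<integral>x. g x \<partial>\<mu>)" using gpos by (intro Bochner_Integration.integral_nonneg) auto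
    then show ?thesis using gint unfolding m\<mu>_def m\<nu>_def by simp
  qed
  have setsp: "sets (\<mu> \<Otimes>\<^sub>M \<nu>) = sets (borel \<Otimes>\<^sub>M borel)"
    by (rule sets_pair_measure_cong[OF setsm setsn])
  have meqp: "borel_measurable (\<mu> \<Otimes>\<^sub>M \<nu>) = borel_measurable (borel \<Otimes>\<^sub>M borel)"
    by (rule measurable_cong_sets[OF setsp refl])
  have pm: "(\<lambda>p. ennreal (norm (S (fst p) - S (snd p))^2 + inner (fst p - snd p) (b (fst p) - b (snd p)))) \<in> borel_measurable (\<mu> \<Otimes>\<^sub>M \<nu>)"
    unfolding meqp by measurable
  have "(\<integral>\<^sup>+p. ennreal (norm (S (fst p) - S (snd p))^2 + inner (fst p - snd p) (b (fst p) - b (snd p))) \<partial>(\<mu> \<Otimes>\<^sub>M \<nu>))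
      = (\<integral>\<^sup>+x. \<integral>\<^sup>+y. ennreal (F x y) \<partial>\<nu> \<partial>\<mu>)"
    using N.nn_integral_fst[OF pm] by (simp add: F_def)
  also have "\<dots> = (\<integral>\<^sup>+x. ennreal (g x) \<partial>\<mu>)"
  proof (rule nn_integral_cong)
    fix x
    show "(\<integral>\<^sup>+y. ennreal (F x y) \<partial>\<nu>) = ennreal (g x)"
      unfolding inner_int[symmetric] using Fi Fpos by (intro nn_integral_eq_integral) (auto simp: F_def)
  qed
  also have "\<dots> = ennreal (- 2 * inner m\<mu> m\<nu>)"
    unfolding gint[symmetric] using gi gpos by (intro nn_integral_eq_integral) auto
  finally show "(\<integral>\<^sup>+p. ennreal (norm (S (fst p) - S (snd p))^2 + inner (fst p - snd p) (b (fst p) - b (snd p))) \<partial>(\<mu> \<Otimes>\<^sub>M \<nu>))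
      = ennreal (- 2 * inner (\<integral>x. S x \<partial>\<mu>) (\<integral>x. S x \<partial>\<nu>))" by (simp add: m\<mu>_def m\<nu>_def)
qed

theorem mainTheorem8:
  fixes \<Sigma> :: "real^'d \<Rightarrow> real^'d1^'d" and b :: "real^'d \<Rightarrow> real^'d" and lam :: real
  assumes "\<Sigma> \<in> borel_measurable borel" and "b \<in> borel_measurable borel"
    and "lam > 0"
    and "\<And>x y. x \<noteq> y \<Longrightarrow> inner (x - y) (b x - b y) \<ge> - lam * (norm (x - y))\<^sup>2"
    and "\<And>x y. x \<noteq> y \<Longrightarrow>
           trace ((\<Sigma> x - \<Sigma> y) ** transpose (\<Sigma> x - \<Sigma> y)) > lam * (norm (x - y))\<^sup>2"
  shows "\<forall>\<mu> \<nu>. prob_solution (\<lambda>x. \<Sigma> x ** transpose (\<Sigma> x)) b \<mu>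
           \<and> (\<integral>\<^sup>+ x. ennreal ((norm (\<Sigma> x))\<^sup>2 + norm (b x) * norm x) \<partial>\<mu>) < \<infinity>
           \<and> prob_solution (\<lambda>x. \<Sigma> x ** transpose (\<Sigma> x)) b \<nu>
           \<and> (\<integral>\<^sup>+ x. ennreal ((norm (\<Sigma> x))\<^sup>2 + norm (b x) * norm x) \<partial>\<nu>) < \<infinity>
           \<longrightarrow> \<mu> = \<nu>"
proof (intro allI impI)
  fix \<mu> \<nu> :: "(real^'d) measure"
  assume H: "prob_solution (\<lambda>x. \<Sigma> x ** transpose (\<Sigma> x)) b \<mu>
           \<and> (\<integral>\<^sup>+ x. ennreal ((norm (\<Sigma> x))\<^sup>2 + norm (b x) * norm x) \<partial>\<mu>) < \<infinity>
           \<and> prob_solution (\<lambda>x. \<Sigma> x ** transpose (\<Sigma> x)) b \<nu>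
           \<and> (\<integral>\<^sup>+ x. ennreal ((norm (\<Sigma> x))\<^sup>2 + norm (b x) * norm x) \<partial>\<nu>) < \<infinity>"
  then have psm: "prob_solution (\<lambda>x. \<Sigma> x ** transpose (\<Sigma> x)) b \<mu>"
    and momm: "(\<integral>\<^sup>+ x. ennreal ((norm (\<Sigma> x))\<^sup>2 + norm (b x) * norm x) \<partial>\<mu>) < \<infinity>"
    and psn: "prob_solution (\<lambda>x. \<Sigma> x ** transpose (\<Sigma> x)) b \<nu>"
    and momn: "(\<integral>\<^sup>+ x. ennreal ((norm (\<Sigma> x))\<^sup>2 + norm (b x) * norm x) \<partial>\<nu>) < \<infinity>"
    by auto
  note Sm[measurable] = assms(1) and bm[measurable] = assms(2)
  have Fposs: "0 < norm (\<Sigma> x - \<Sigma> y)^2 + inner (x - y) (b x - b y)" if "x \<noteq> y" for x y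
    using assms(4)[OF that] assms(5)[OF that] by (simp add: trace_sq)
  have Fpos: "0 \<le> norm (\<Sigma> x - \<Sigma> y)^2 + inner (x - y) (b x - b y)" for x y
    using Fposs[of x y] by (cases "x = y") auto
  have m0: "(\<integral>x. \<Sigma> x \<partial>M) = 0" if "prob_solution (\<lambda>x. \<Sigma> x ** transpose (\<Sigma> x)) b M"
    "(\<integral>\<^sup>+ x. ennreal ((norm (\<Sigma> x))\<^sup>2 + norm (b x) * norm x) \<partial>M) < \<infinity>" for M
  proof -
    have "0 \<le> - 2 * inner (\<integral>x. \<Sigma> x \<partial>M) (\<integral>x. \<Sigma> x \<partial>M)"
      by (rule pair_lemma(2)[OF assms(1,2,3,5) Fpos that that])
    then have "inner (\<integral>x. \<Sigma> x \<partial>M) (\<integral>x. \<Sigma> x \<partial>M) \<le> 0" by simp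
    then have "inner (\<integral>x. \<Sigma> x \<partial>M) (\<integral>x. \<Sigma> x \<partial>M) = 0"
      using inner_ge_zero[of "\<integral>x. \<Sigma> x \<partial>M"] by linarith
    then show ?thesis by simp
  qed
  have zero: "(\<integral>\<^sup>+p. ennreal (norm (\<Sigma> (fst p) - \<Sigma> (snd p))^2 + inner (fst p - snd p) (b (fst p) - b (snd p))) \<partial>(\<mu> \<Otimes>\<^sub>M \<nu>)) = 0"
    using pair_lemma(1)[OF assms(1,2,3,5) Fpos psm momm psn momn] m0[OF psm momm] m0[OF psn momn] by simp
  have setsm: "sets \<mu> = sets borel" and Pm: "prob_space \<mu>" using psm by (auto simp: prob_solution_def)
  have setsn: "sets \<nu> = sets borel" and Pn: "prob_space \<nu>" using psn by (auto simp: prob_solution_def)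
  interpret M: prob_space \<mu> by (rule Pm)
  interpret N: prob_space \<nu> by (rule Pn)
  have spm: "space \<mu> = UNIV" using sets_eq_imp_space_eq[OF setsm] by simp
  have spn: "space \<nu> = UNIV" using sets_eq_imp_space_eq[OF setsn] by simp
  have setsp: "sets (\<mu> \<Otimes>\<^sub>M \<nu>) = sets (borel \<Otimes>\<^sub>M borel)"
    by (rule sets_pair_measure_cong[OF setsm setsn])
  have meqp: "borel_measurable (\<mu> \<Otimes>\<^sub>M \<nu>) = borel_measurable (borel \<Otimes>\<^sub>M borel)"
    by (rule measurable_cong_sets[OF setsp refl])
  have pm: "(\<lambda>p. ennreal (norm (\<Sigma> (fst p) - \<Sigma> (snd p))^2 + inner (fst p - snd p) (b (fst p) - b (snd p)))) \<in> borel_measurable (\<mu> \<Otimes>\<^sub>M \<nu>)"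
    unfolding meqp by measurable
  have AEd: "AE p in \<mu> \<Otimes>\<^sub>M \<nu>. fst p = snd p"
  proof -
    have "AE p in \<mu> \<Otimes>\<^sub>M \<nu>. ennreal (norm (\<Sigma> (fst p) - \<Sigma> (snd p))^2 + inner (fst p - snd p) (b (fst p) - b (snd p))) = 0"
      using zero nn_integral_0_iff_AE[OF pm] by simp
    then show ?thesis
    proof (rule eventually_mono)
      fix p :: "(real^'d) \<times> (real^'d)"
      assume "ennreal (norm (\<Sigma> (fst p) - \<Sigma> (snd p))^2 + inner (fst p - snd p) (b (fst p) - b (snd p))) = 0"
      then have "norm (\<Sigma> (fst p) - \<Sigma> (snd p))^2 + inner (fst p - snd p) (b (fst p) - b (snd p)) \<le> 0" by (simp only: ennreal_eq_0_iff)
      then show "fst p = snd p" using Fposs[of "fst p" "snd p"] by force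
    qed
  qed
  have cross: "emeasure \<mu> A * emeasure \<nu> B = 0" if A: "A \<in> sets borel" and B: "B \<in> sets borel" and AB: "A \<inter> B = {}" for A B
  proof -
    have "AE p in \<mu> \<Otimes>\<^sub>M \<nu>. \<not> (fst p \<in> A \<and> snd p \<in> B)"
      using AEd by (rule eventually_mono) (use AB in auto)
    then have "emeasure (\<mu> \<Otimes>\<^sub>M \<nu>) {p \<in> space (\<mu> \<Otimes>\<^sub>M \<nu>). fst p \<in> A \<and> snd p \<in> B} = 0"
      by (rule emeasure_eq_0_AE)
    moreover have "{p \<in> space (\<mu> \<Otimes>\<^sub>M \<nu>). fst p \<in> A \<and> snd p \<in> B} = A \<times> B"
      by (auto simp: space_pair_measure spm spn)
    moreover have "emeasure (\<mu> \<Otimes>\<^sub>M \<nu>) (A \<times> B) = emeasure \<mu> A * emeasure \<nu> B"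
      using A B setsm setsn by (intro N.emeasure_pair_measure_Times) auto
    ultimately show ?thesis by simp
  qed
  show "\<mu> = \<nu>"
  proof (rule measure_eqI)
    show "sets \<mu> = sets \<nu>" using setsm setsn by simp
    fix A assume "A \<in> sets \<mu>"
    then have A: "A \<in> sets borel" using setsm by simp
    have C: "UNIV - A \<in> sets borel" using A by auto
    have e1: "emeasure \<mu> A * emeasure \<nu> (UNIV - A) = 0" by (rule cross[OF A C]) auto
    have e2: "emeasure \<mu> (UNIV - A) * emeasure \<nu> A = 0" by (rule cross[OF C A]) auto
    have An: "A \<in> sets \<nu>" "A \<in> sets \<mu>" using A setsm setsn by auto
    have cn: "measure \<nu> (UNIV - A) = 1 - measure \<nu> A" using N.prob_compl[OF An(1)] spn by simp
    have cm: "measure \<mu> (UNIV - A) = 1 - measure \<mu> A" using M.prob_compl[OF An(2)] spm by simp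
    have r1: "measure \<mu> A * (1 - measure \<nu> A) = 0"
      using e1 unfolding M.emeasure_eq_measure N.emeasure_eq_measure cn
      by (simp add: ennreal_mult'[symmetric] N.prob_le_1)
    have r2: "(1 - measure \<mu> A) * measure \<nu> A = 0"
      using e2 unfolding M.emeasure_eq_measure N.emeasure_eq_measure cm
      by (simp add: ennreal_mult'[symmetric] M.prob_le_1)
    have "measure \<mu> A = measure \<nu> A" using r1 r2 by (simp add: algebra_simps) auto
    then show "emeasure \<mu> A = emeasure \<nu> A"
      by (simp add: M.emeasure_eq_measure N.emeasure_eq_measure)
  qed
qed

end
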